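(* For every fixed $t\in\mathcal{T}$, every fixed $y_0$, and with the remaining arguments held fixed, the state-of-charge functional $y(x^0,x^\uparrow,x^\downarrow,\xi,y_0,t)$ is concave and decreasing in $x^0\in\mathcal{F}(\mathcal{T},\mathbb{R})$, concave and nonincreasing in $x^\uparrow\in\mathcal{F}(\mathcal{T},\mathbb{R}_+)$, concave and nondecreasing in $x^\downarrow\in\mathcal{F}(\mathcal{T},\mathbb{R}_+)$, and nonincreasing in $\xi\in\mathcal{R}(\mathcal{T},[-1,1])$. Monotonicity is with respect to the pointwise order on functions, and concavity refers to the vector-space structure of the corresponding function spaces.
   Context: Fix a positive integer $K$, $\Delta t>0$, $T=K\Delta t$ and $\mathcal{T}=[0,T]$. Partition $\mathcal{T}$ into the intervals $\mathcal{T}_k=[(k-1)\Delta t,k\Delta t)$ for $k<K$ and $\mathcal{T}_K=[T-\Delta t,T]$. For $U\subseteq\mathbb{R}$, let $\mathcal{F}(\mathcal{T},U)$ be the set of functions $\mathcal{T}\to U$ that are constant on each $\mathcal{T}_k$, and let $\mathcal{R}(\mathcal{T},U)$ be the set of Riemann integrable functions $\mathcal{T}\to U$. Write $[z]^+=\max\{z,0\}$ and $[z]^-=\max\{-z,0\}$. Let $\eta^{c},\eta^{d}\in(0,1)$ be the charging and discharging efficiencies and let $y_0\ge 0$. The power output is $x(a,b,c,s)=a+[s]^+b-[s]^-c$ for $a\in\mathbb{R}$, $b,c\ge0$, $s\in\mathbb{R}$. For $x^0\in\mathcal{F}(\mathcal{T},\mathbb{R})$, $x^\uparrow,x^\downarrow\in\mathcal{F}(\mathcal{T},\mathbb{R}_+)$,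 $\xi\in\mathcal{R}(\mathcal{T},[-1,1])$ and $t\in\mathcal{T}$, the state of charge is $$y(x^0,x^\uparrow,x^\downarrow,\xi,y_0,t)=y_0+\int_0^t \eta^{c}\big[x(x^0(\tau),x^\uparrow(\tau),x^\downarrow(\tau),\xi(\tau))\big]^- -\frac{1}{\eta^{d}}\big[x(x^0(\tau),x^\uparrow(\tau),x^\downarrow(\tau),\xi(\tau))\big]^+\,d\tau .$$ *)

theory Defs
  imports "HOL-Analysis.Analysis"
begin

definition Tk :: "nat \<Rightarrow> real \<Rightarrow> nat \<Rightarrow> real set" where
  "Tk K dt k = (if k < K then {(real k - 1) * dt ..< real k * dt}
                else {real K * dt - dt .. real K * dt})"

text \<open>F(T,U): functions on [0,T] with values in U, constant on each T_k.\<close>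
definition pc_fun :: "nat \<Rightarrow> real \<Rightarrow> real set \<Rightarrow> (real \<Rightarrow> real) set" where
  "pc_fun K dt U = {f. (\<forall>\<tau>\<in>{0 .. real K * dt}. f \<tau> \<in> U) \<and>
                       (\<forall>k\<in>{1..K}. \<exists>c. \<forall>\<tau>\<in>Tk K dt k. f \<tau> = c)}"

text \<open>Riemann integrability on [a,b]: limit of Riemann sums as the mesh goes to 0.\<close>
definition riemann_integrable :: "(real \<Rightarrow> real) \<Rightarrow> real \<Rightarrow> real \<Rightarrow> bool" where
  "riemann_integrable f a b \<longleftrightarrow>
     (\<exists>I. \<forall>e>0. \<exists>d>0. \<forall>p. p tagged_division_of {a..b} \<and> (\<lambda>x. ball x d) fine p \<longrightarrow>
        \<bar>(\<Sum>(x,J)\<in>p. Henstock_Kurzweil_Integration.content (J::real set) * f x) - I\<bar> < e)"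

text \<open>R(T,U): Riemann integrable functions on [0,T] with values in U.\<close>
definition r_fun :: "nat \<Rightarrow> real \<Rightarrow> real set \<Rightarrow> (real \<Rightarrow> real) set" where
  "r_fun K dt U = {f. (\<forall>\<tau>\<in>{0 .. real K * dt}. f \<tau> \<in> U) \<and> riemann_integrable f 0 (real K * dt)}"

definition pospart :: "real \<Rightarrow> real" where "pospart z = max z 0"
definition negpart :: "real \<Rightarrow> real" where "negpart z = max (- z) 0"

definition pout :: "real \<Rightarrow> real \<Rightarrow> real \<Rightarrow> real \<Rightarrow> real" where
  "pout a b c s = a + pospart s * b - negpart s * c"

definition soc :: "real \<Rightarrow> real \<Rightarrow> (real \<Rightarrow> real) \<Rightarrow> (real \<Rightarrow> real) \<Rightarrow> (real \<Rightarrow> real)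
                   \<Rightarrow> (real \<Rightarrow> real) \<Rightarrow> real \<Rightarrow> real \<Rightarrow> real" where
  "soc etac etad x0 xu xd xi y0 t = y0 + integral {0..t}
     (\<lambda>\<tau>. etac * negpart (pout (x0 \<tau>) (xu \<tau>) (xd \<tau>) (xi \<tau>))
           - (1 / etad) * pospart (pout (x0 \<tau>) (xu \<tau>) (xd \<tau>) (xi \<tau>)))"

definition concave_fun :: "(real \<Rightarrow> real) set \<Rightarrow> ((real \<Rightarrow> real) \<Rightarrow> real) \<Rightarrow> bool" where
  "concave_fun S g \<longleftrightarrow> (\<forall>a\<in>S. \<forall>b\<in>S. \<forall>l::real. 0 \<le> l \<and> l \<le> 1 \<longrightarrow>
      l * g a + (1 - l) * g b \<le> g (\<lambda>\<tau>. l * a \<tau> + (1 - l) * b \<tau>))"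

definition antimono_fun :: "real \<Rightarrow> (real \<Rightarrow> real) set \<Rightarrow> ((real \<Rightarrow> real) \<Rightarrow> real) \<Rightarrow> bool" where
  "antimono_fun T S g \<longleftrightarrow> (\<forall>a\<in>S. \<forall>b\<in>S. (\<forall>\<tau>\<in>{0..T}. a \<tau> \<le> b \<tau>) \<longrightarrow> g b \<le> g a)"

definition mono_fun :: "real \<Rightarrow> (real \<Rightarrow> real) set \<Rightarrow> ((real \<Rightarrow> real) \<Rightarrow> real) \<Rightarrow> bool" where
  "mono_fun T S g \<longleftrightarrow> (\<forall>a\<in>S. \<forall>b\<in>S. (\<forall>\<tau>\<in>{0..T}. a \<tau> \<le> b \<tau>) \<longrightarrow> g a \<le> g b)"

end

theory Submission
  imports Defs
begin
definition good :: "real set \<Rightarrow> (real \<Rightarrow> real) \<Rightarrow> bool" where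
  "good S f \<longleftrightarrow> f \<in> borel_measurable (lebesgue_on S) \<and> (\<exists>M. \<forall>x\<in>S. \<bar>f x\<bar> \<le> M)"

lemma good_add: "good S f \<Longrightarrow> good S g \<Longrightarrow> good S (\<lambda>x. f x + g x)"
  unfolding good_def
proof (elim conjE exE, intro conjI)
  fix M N assume "\<forall>x\<in>S. \<bar>f x\<bar> \<le> M" "\<forall>x\<in>S. \<bar>g x\<bar> \<le> N"
  then show "\<exists>M. \<forall>x\<in>S. \<bar>f x + g x\<bar> \<le> M"
    by (intro exI[of _ "M+N"]) (auto intro: order.trans[OF abs_triangle_ineq] add_mono)
qed auto

lemma good_mult: "good S f \<Longrightarrow> good S g \<Longrightarrow> good S (\<lambda>x. f x * g x)"
  unfolding good_def
proof (elim conjE exE, intro conjI)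
  fix M N assume a: "\<forall>x\<in>S. \<bar>f x\<bar> \<le> M" "\<forall>x\<in>S. \<bar>g x\<bar> \<le> N"
  show "\<exists>M. \<forall>x\<in>S. \<bar>f x * g x\<bar> \<le> M"
  proof (intro exI[of _ "M*N"] ballI)
    fix x assume "x \<in> S"
    then show "\<bar>f x * g x\<bar> \<le> M * N" using a by (simp add: abs_mult mult_mono')
  qed
qed auto

lemma good_const: "good S (\<lambda>x. c)"
  unfolding good_def by auto

lemma good_uminus: "good S f \<Longrightarrow> good S (\<lambda>x. - f x)"
  unfolding good_def by auto

lemma good_max: "good S f \<Longrightarrow> good S g \<Longrightarrow> good S (\<lambda>x. max (f x) (g x))"
  unfolding good_def
proof (elim conjE exE, intro conjI)
  fix M N assume a: "\<forall>x\<in>S. \<bar>f x\<bar> \<le> M" "\<forall>x\<in>S. \<bar>g x\<bar> \<le> N"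
  show "\<exists>M. \<forall>x\<in>S. \<bar>max (f x) (g x)\<bar> \<le> M"
    using a by (intro exI[of _ "M+N"]) fastforce
qed auto

lemma good_integrable:
  assumes "good {a..b} f" shows "f integrable_on {a..b}"
proof -
  obtain M where M: "\<forall>x\<in>{a..b}. \<bar>f x\<bar> \<le> M" and m: "f \<in> borel_measurable (lebesgue_on {a..b})"
    using assms unfolding good_def by auto
  show ?thesis
    by (rule measurable_bounded_by_integrable_imp_integrable[OF m, of "\<lambda>_. M"]) (use M in auto)
qed

lemma pc_eq:
  assumes "f \<in> pc_fun K dt U" "K > 0" "dt > 0" "\<tau> \<in> {0 .. real K * dt}"
  shows "f \<tau> = f (dt * real_of_int (min (int K - 1) \<lfloor>\<tau>/dt\<rfloor>))"
proof -
  define n where "n = \<lfloor>\<tau>/dt\<rfloor>"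
  define m where "m = min (int K - 1) n"
  have n0: "n \<ge> 0" using assms unfolding n_def by auto
  have nle: "real_of_int n \<le> \<tau>/dt" "\<tau>/dt < real_of_int n + 1" unfolding n_def by linarith+
  define k where "k = nat m + 1"
  have k: "k \<in> {1..K}" unfolding k_def m_def using n0 assms by auto
  have "\<exists>c. \<forall>\<sigma>\<in>Tk K dt k. f \<sigma> = c" using assms(1) k unfolding pc_fun_def by blast
  then obtain c where c: "\<forall>\<sigma>\<in>Tk K dt k. f \<sigma> = c" by blast
  have m0: "m \<ge> 0" unfolding m_def using n0 assms(2) by auto
  have rk: "real k - 1 = real_of_int m" unfolding k_def using m0 by auto
  have "\<tau> \<in> Tk K dt k \<and> dt * real_of_int m \<in> Tk K dt k"
  proof (cases "k < K")
    case True
    then have "m = n" unfolding k_def m_def using n0 by auto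
    then show ?thesis using True rk nle assms(3) unfolding Tk_def
      by (auto simp: field_simps)
  next
    case False
    then have "k = K" using k by auto
    then have "m = int K - 1" "n \<ge> int K - 1" unfolding k_def m_def using n0 by auto
    then have r1: "real K = real_of_int m + 1" "real K \<le> real_of_int n + 1"
      by (metis of_int_of_nat_eq add.commute diff_add_cancel of_int_add of_int_1, linarith)
    have "dt * real K \<le> dt * (real_of_int n + 1)" using r1(2) assms(3) by (intro mult_left_mono) auto
    moreover have "dt * real_of_int n \<le> \<tau>" using nle(1) assms(3) by (simp add: field_simps)
    moreover have "dt * real_of_int m \<le> dt * real_of_int n" using assms(3) unfolding m_def by (intro mult_left_mono) auto
    ultimately have "dt * real_of_int m \<le> \<tau>" "dt * real K \<le> \<tau> + dt" by (linarith, simp add: algebra_simps)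
    then show ?thesis using False r1 assms(3,4) \<open>k = K\<close> unfolding Tk_def
      by (auto simp: field_simps)
  qed
  then show ?thesis using c unfolding m_def n_def by auto
qed

lemma pc_good:
  assumes "f \<in> pc_fun K dt U" "K > 0" "dt > 0" "{a..b} \<subseteq> {0 .. real K * dt}"
  shows "good {a..b} f"
proof -
  define S where "S = {a..b}"
  have S: "S \<subseteq> {0 .. real K * dt}" "S \<in> sets lebesgue" using assms(4) unfolding S_def by auto
  define g where "g = (\<lambda>\<tau>. f (dt * real_of_int (min (int K - 1) \<lfloor>\<tau>/dt\<rfloor>)))"
  have eq: "\<And>\<tau>. \<tau> \<in> S \<Longrightarrow> f \<tau> = g \<tau>" using pc_eq[OF assms(1-3)] S unfolding g_def by auto
  have fl: "(\<lambda>\<tau>::real. \<lfloor>\<tau>/dt\<rfloor>) \<in> measurable (lebesgue_on S) (count_space UNIV)"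
  proof (rule measurable_compose[OF _ measurable_real_floor])
    show "(\<lambda>\<tau>::real. \<tau>/dt) \<in> borel_measurable (lebesgue_on S)"
      by (rule continuous_imp_measurable_on_sets_lebesgue[OF _ S(2)]) (use assms(3) in \<open>intro continuous_intros, auto\<close>)
  qed
  have "g \<in> borel_measurable (lebesgue_on S)"
    unfolding g_def
    by (rule measurable_compose_countable[where f = "\<lambda>i \<tau>. f (dt * real_of_int (min (int K - 1) i))", OF _ fl]) simp
  then have m: "f \<in> borel_measurable (lebesgue_on S)"
    by (rule measurable_cong[THEN iffD2, rotated]) (simp add: eq)
  have "\<forall>\<tau>\<in>S. \<bar>f \<tau>\<bar> \<le> (\<Sum>i<K. \<bar>f (dt * real i)\<bar>)"
  proof
    fix \<tau> assume "\<tau> \<in> S"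
    have n0: "\<lfloor>\<tau>/dt\<rfloor> \<ge> 0" using \<open>\<tau> \<in> S\<close> S assms by auto
    define i where "i = nat (min (int K - 1) \<lfloor>\<tau>/dt\<rfloor>)"
    have i: "i < K" "real_of_int (min (int K - 1) \<lfloor>\<tau>/dt\<rfloor>) = real i" unfolding i_def using n0 assms(2) by auto
    have "\<bar>f \<tau>\<bar> = \<bar>f (dt * real i)\<bar>" using eq[OF \<open>\<tau> \<in> S\<close>] i unfolding g_def by simp
    also have "\<dots> \<le> (\<Sum>i<K. \<bar>f (dt * real i)\<bar>)"
      by (rule member_le_sum) (use i in auto)
    finally show "\<bar>f \<tau>\<bar> \<le> (\<Sum>i<K. \<bar>f (dt * real i)\<bar>)" .
  qed
  then show ?thesis using m unfolding good_def S_def by blast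
qed

lemma riemann_has_integral:
  assumes "riemann_integrable f a b" shows "f integrable_on {a..b}"
proof -
  obtain I where I: "\<forall>e>0. \<exists>d>0. \<forall>p. p tagged_division_of {a..b} \<and> (\<lambda>x. ball x d) fine p \<longrightarrow>
        \<bar>(\<Sum>(x,J)\<in>p. Henstock_Kurzweil_Integration.content (J::real set) * f x) - I\<bar> < e"
    using assms unfolding riemann_integrable_def by blast
  have "(f has_integral I) (cbox a b)"
    unfolding has_integral
  proof (intro allI impI)
    fix e :: real assume "e > 0"
    then obtain d where d: "d > 0" "\<forall>p. p tagged_division_of {a..b} \<and> (\<lambda>x. ball x d) fine p \<longrightarrow>
        \<bar>(\<Sum>(x,J)\<in>p. Henstock_Kurzweil_Integration.content (J::real set) * f x) - I\<bar> < e" using I by blast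
    show "\<exists>\<gamma>. gauge \<gamma> \<and> (\<forall>\<D>. \<D> tagged_division_of cbox a b \<and> \<gamma> fine \<D> \<longrightarrow>
            norm ((\<Sum>(x, k)\<in>\<D>. Henstock_Kurzweil_Integration.content k *\<^sub>R f x) - I) < e)"
      by (rule exI[of _ "\<lambda>x. ball x d"]) (use d in \<open>auto simp: gauge_ball cbox_interval\<close>)
  qed
  then show ?thesis by (auto simp: integrable_on_def cbox_interval)
qed

lemma r_good:
  assumes "f \<in> r_fun K dt {-1..1}" "{a..b} \<subseteq> {0 .. real K * dt}" "a \<le> b"
  shows "good {a..b} f"
proof -
  have "f integrable_on {0 .. real K * dt}" using assms(1) riemann_has_integral unfolding r_fun_def by blast
  then have "f integrable_on {a..b}" using assms(2) by (rule integrable_on_subinterval)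
  then have m: "f \<in> borel_measurable (lebesgue_on {a..b})" by (rule integrable_imp_measurable)
  have "\<forall>x\<in>{a..b}. \<bar>f x\<bar> \<le> 1" using assms(1,2) unfolding r_fun_def by (auto simp: abs_le_iff)
  then show ?thesis using m unfolding good_def by blast
qed

definition H :: "real \<Rightarrow> real \<Rightarrow> real \<Rightarrow> real" where
  "H etac etad p = etac * negpart p - (1 / etad) * pospart p"

lemma soc_eq: "soc etac etad x0 xu xd xi y0 t =
   y0 + integral {0..t} (\<lambda>\<tau>. H etac etad (pout (x0 \<tau>) (xu \<tau>) (xd \<tau>) (xi \<tau>)))"
  by (simp add: soc_def H_def)

lemma good_H: "good S a \<Longrightarrow> good S b \<Longrightarrow> good S c \<Longrightarrow> good S s \<Longrightarrow>
  good S (\<lambda>\<tau>. H etac etad (pout (a \<tau>) (b \<tau>) (c \<tau>) (s \<tau>)))"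
  unfolding H_def pout_def pospart_def negpart_def diff_conv_add_uminus
  by (intro good_add good_mult good_const good_uminus good_max)

lemma good_comb: "good S a \<Longrightarrow> good S b \<Longrightarrow> good S (\<lambda>\<tau>. l * a \<tau> + (1 - l) * b \<tau>)"
  by (intro good_add good_mult good_const)

lemma H_min: assumes "0 < etac" "etac < 1" "0 < etad" "etad < 1"
  shows "H etac etad p = min (- etac * p) (- p / etad)"
proof -
  have "1 / etad > 1" using assms by simp
  then have e: "etac < 1 / etad" using assms by linarith
  show ?thesis
  proof (cases "p \<ge> 0")
    case True
    then have "etac * p \<le> (1/etad) * p" using e by (intro mult_right_mono) auto
    then show ?thesis using True by (simp add: H_def pospart_def negpart_def)
  next
    case False
    then have "etac * (-p) \<le> (1/etad) * (-p)" using e by (intro mult_right_mono) auto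
    then show ?thesis using False by (simp add: H_def pospart_def negpart_def)
  qed
qed

lemma H_anti: assumes "0 < etac" "etac < 1" "0 < etad" "etad < 1" "p \<le> q"
  shows "H etac etad q \<le> H etac etad p"
proof -
  have "- etac * q \<le> - etac * p" using assms by simp
  moreover have "- q / etad \<le> - p / etad" using assms by (simp add: divide_right_mono)
  ultimately show ?thesis unfolding H_min[OF assms(1-4)] by linarith
qed

lemma H_conc: assumes "0 < etac" "etac < 1" "0 < etad" "etad < 1" "0 \<le> l" "l \<le> 1"
  shows "l * H etac etad p + (1 - l) * H etac etad q \<le> H etac etad (l * p + (1 - l) * q)"
proof -
  let ?m = "\<lambda>p. min (- etac * p) (- p / etad)"
  have 1: "l * ?m p + (1-l) * ?m q \<le> l * (- etac * p) + (1-l) * (- etac * q)"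
    using assms by (intro add_mono mult_left_mono) auto
  have 2: "l * ?m p + (1-l) * ?m q \<le> l * (- p / etad) + (1-l) * (- q / etad)"
    using assms by (intro add_mono mult_left_mono) auto
  have "l * ?m p + (1-l) * ?m q \<le> ?m (l * p + (1 - l) * q)"
    using 1 2 by (simp add: algebra_simps add_divide_distrib diff_divide_distrib)
  then show ?thesis unfolding H_min[OF assms(1-4)] .
qed

lemma conc_int:
  assumes "good {a..b} f" "good {a..b} g" "good {a..b} h"
    "\<And>x. x \<in> {a..b} \<Longrightarrow> l * f x + (1 - l) * g x \<le> h x"
  shows "l * (y0 + integral {a..b} f) + (1 - l) * (y0 + integral {a..b} g) \<le> y0 + integral {a..b} h"
proof -
  have i: "(\<lambda>x. l * f x) integrable_on {a..b}" "(\<lambda>x. (1-l) * g x) integrable_on {a..b}"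
    "(\<lambda>x. l * f x + (1 - l) * g x) integrable_on {a..b}" "h integrable_on {a..b}"
    using assms(1-3) by (auto intro!: good_integrable good_mult good_const good_comb)
  have "integral {a..b} (\<lambda>x. l * f x + (1 - l) * g x) = l * integral {a..b} f + (1 - l) * integral {a..b} g"
    using integral_add[OF i(1,2)] integral_cmul[of "{a..b}" l f] integral_cmul[of "{a..b}" "1-l" g] by simp
  moreover have "integral {a..b} (\<lambda>x. l * f x + (1 - l) * g x) \<le> integral {a..b} h"
    by (rule integral_le[OF i(3,4)]) (use assms(4) in auto)
  ultimately show ?thesis by (simp add: algebra_simps)
qed

lemma mono_int:
  assumes "good {a..b} f" "good {a..b} g" "\<And>x. x \<in> {a..b} \<Longrightarrow> f x \<le> g x"
  shows "y0 + integral {a..b} f \<le> y0 + integral {a..b} g"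
  using integral_le[OF good_integrable[OF assms(1)] good_integrable[OF assms(2)]] assms(3) by auto

lemma pout_aff1: "pout (l*a+(1-l)*a') b c s = l*pout a b c s + (1-l)*pout a' b c s"
  by (simp add: pout_def algebra_simps)
lemma pout_aff2: "pout a (l*b+(1-l)*b') c s = l*pout a b c s + (1-l)*pout a b' c s"
  by (simp add: pout_def algebra_simps)
lemma pout_aff3: "pout a b (l*c+(1-l)*c') s = l*pout a b c s + (1-l)*pout a b c' s"
  by (simp add: pout_def algebra_simps)
lemma pout_mono1: "a \<le> a' \<Longrightarrow> pout a b c s \<le> pout a' b c s"
  by (simp add: pout_def)
lemma pout_mono2: "b \<le> b' \<Longrightarrow> pout a b c s \<le> pout a b' c s"
  by (simp add: pout_def pospart_def mult_left_mono)
lemma pout_mono3: "c \<le> c' \<Longrightarrow> pout a b c' s \<le> pout a b c s"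
  by (simp add: pout_def negpart_def mult_left_mono)
lemma pout_mono4: "s \<le> s' \<Longrightarrow> 0 \<le> b \<Longrightarrow> 0 \<le> c \<Longrightarrow> pout a b c s \<le> pout a b c s'"
  unfolding pout_def pospart_def negpart_def
  by (intro add_mono diff_mono mult_right_mono) auto

theorem proposition2:
  fixes K :: nat and dt etac etad y0 t :: real
  assumes "K > 0" and "dt > 0"
    and "0 < etac" "etac < 1" and "0 < etad" "etad < 1"
    and "y0 \<ge> 0" and "t \<in> {0 .. real K * dt}"
  shows
    "(\<forall>xu\<in>pc_fun K dt {0..}. \<forall>xd\<in>pc_fun K dt {0..}. \<forall>xi\<in>r_fun K dt {-1..1}.
        concave_fun (pc_fun K dt UNIV) (\<lambda>x0. soc etac etad x0 xu xd xi y0 t) \<and>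
        antimono_fun (real K * dt) (pc_fun K dt UNIV) (\<lambda>x0. soc etac etad x0 xu xd xi y0 t))
   \<and> (\<forall>x0\<in>pc_fun K dt UNIV. \<forall>xd\<in>pc_fun K dt {0..}. \<forall>xi\<in>r_fun K dt {-1..1}.
        concave_fun (pc_fun K dt {0..}) (\<lambda>xu. soc etac etad x0 xu xd xi y0 t) \<and>
        antimono_fun (real K * dt) (pc_fun K dt {0..}) (\<lambda>xu. soc etac etad x0 xu xd xi y0 t))
   \<and> (\<forall>x0\<in>pc_fun K dt UNIV. \<forall>xu\<in>pc_fun K dt {0..}. \<forall>xi\<in>r_fun K dt {-1..1}.
        concave_fun (pc_fun K dt {0..}) (\<lambda>xd. soc etac etad x0 xu xd xi y0 t) \<and>
        mono_fun (real K * dt) (pc_fun K dt {0..}) (\<lambda>xd. soc etac etad x0 xu xd xi y0 t))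
   \<and> (\<forall>x0\<in>pc_fun K dt UNIV. \<forall>xu\<in>pc_fun K dt {0..}. \<forall>xd\<in>pc_fun K dt {0..}.
        antimono_fun (real K * dt) (r_fun K dt {-1..1}) (\<lambda>xi. soc etac etad x0 xu xd xi y0 t))"
proof -
  have S: "{0..t} \<subseteq> {0..real K * dt}" "0 \<le> t" using assms(8) by auto
  have gpc: "\<And>f U. f \<in> pc_fun K dt U \<Longrightarrow> good {0..t} f" using pc_good assms(1,2) S(1) by blast
  have gr: "\<And>f. f \<in> r_fun K dt {-1..1} \<Longrightarrow> good {0..t} f" using r_good S by blast
  have nn: "\<And>f \<tau>. f \<in> pc_fun K dt {0..} \<Longrightarrow> \<tau> \<in> {0..t} \<Longrightarrow> 0 \<le> f \<tau>"
    using S unfolding pc_fun_def by auto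
  have sub: "\<And>\<tau>. \<tau> \<in> {0..t} \<Longrightarrow> \<tau> \<in> {0..real K * dt}" using S by auto
  note e = assms(3-6)
  show ?thesis
    unfolding concave_fun_def antimono_fun_def mono_fun_def soc_eq
  proof (intro conjI ballI allI impI)
    fix xu xd xi a b l
    assume m: "xu \<in> pc_fun K dt {0..}" "xd \<in> pc_fun K dt {0..}" "xi \<in> r_fun K dt {-1..1}"
      "a \<in> pc_fun K dt UNIV" "b \<in> pc_fun K dt UNIV" and l: "0 \<le> (l::real) \<and> l \<le> 1"
    show "l * (y0 + integral {0..t} (\<lambda>\<tau>. H etac etad (pout (a \<tau>) (xu \<tau>) (xd \<tau>) (xi \<tau>)))) +
       (1 - l) * (y0 + integral {0..t} (\<lambda>\<tau>. H etac etad (pout (b \<tau>) (xu \<tau>) (xd \<tau>) (xi \<tau>))))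
       \<le> y0 + integral {0..t} (\<lambda>\<tau>. H etac etad (pout (l * a \<tau> + (1 - l) * b \<tau>) (xu \<tau>) (xd \<tau>) (xi \<tau>)))"
      by (use gpc[OF m(1)] gpc[OF m(2)] gr[OF m(3)] gpc[OF m(4)] gpc[OF m(5)] m l in \<open>intro conc_int good_H good_comb; assumption?\<close>) (auto simp: pout_aff1 H_conc[OF e])
  next
    fix xu xd xi a b
    assume m: "xu \<in> pc_fun K dt {0..}" "xd \<in> pc_fun K dt {0..}" "xi \<in> r_fun K dt {-1..1}"
      "a \<in> pc_fun K dt UNIV" "b \<in> pc_fun K dt UNIV" and le: "\<forall>\<tau>\<in>{0..real K * dt}. a \<tau> \<le> b \<tau>"
    show "y0 + integral {0..t} (\<lambda>\<tau>. H etac etad (pout (b \<tau>) (xu \<tau>) (xd \<tau>) (xi \<tau>)))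
       \<le> y0 + integral {0..t} (\<lambda>\<tau>. H etac etad (pout (a \<tau>) (xu \<tau>) (xd \<tau>) (xi \<tau>)))"
      by (rule mono_int) (use gpc[OF m(1)] gpc[OF m(2)] gr[OF m(3)] gpc[OF m(4)] gpc[OF m(5)] m le sub in \<open>auto intro!: good_H H_anti[OF e] pout_mono1\<close>)
  next
    fix x0 xd xi a b l
    assume m: "x0 \<in> pc_fun K dt UNIV" "xd \<in> pc_fun K dt {0..}" "xi \<in> r_fun K dt {-1..1}"
      "a \<in> pc_fun K dt {0..}" "b \<in> pc_fun K dt {0..}" and l: "0 \<le> (l::real) \<and> l \<le> 1"
    show "l * (y0 + integral {0..t} (\<lambda>\<tau>. H etac etad (pout (x0 \<tau>) (a \<tau>) (xd \<tau>) (xi \<tau>)))) +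
       (1 - l) * (y0 + integral {0..t} (\<lambda>\<tau>. H etac etad (pout (x0 \<tau>) (b \<tau>) (xd \<tau>) (xi \<tau>))))
       \<le> y0 + integral {0..t} (\<lambda>\<tau>. H etac etad (pout (x0 \<tau>) (l * a \<tau> + (1 - l) * b \<tau>) (xd \<tau>) (xi \<tau>)))"
      by (use gpc[OF m(1)] gpc[OF m(2)] gr[OF m(3)] gpc[OF m(4)] gpc[OF m(5)] m l in \<open>intro conc_int good_H good_comb; assumption?\<close>) (auto simp: pout_aff2 H_conc[OF e])
  next
    fix x0 xd xi a b
    assume m: "x0 \<in> pc_fun K dt UNIV" "xd \<in> pc_fun K dt {0..}" "xi \<in> r_fun K dt {-1..1}"
      "a \<in> pc_fun K dt {0..}" "b \<in> pc_fun K dt {0..}" and le: "\<forall>\<tau>\<in>{0..real K * dt}. a \<tau> \<le> b \<tau>"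
    show "y0 + integral {0..t} (\<lambda>\<tau>. H etac etad (pout (x0 \<tau>) (b \<tau>) (xd \<tau>) (xi \<tau>)))
       \<le> y0 + integral {0..t} (\<lambda>\<tau>. H etac etad (pout (x0 \<tau>) (a \<tau>) (xd \<tau>) (xi \<tau>)))"
      by (rule mono_int) (use gpc[OF m(1)] gpc[OF m(2)] gr[OF m(3)] gpc[OF m(4)] gpc[OF m(5)] m le sub in \<open>auto intro!: good_H H_anti[OF e] pout_mono2\<close>)
  next
    fix x0 xu xi a b l
    assume m: "x0 \<in> pc_fun K dt UNIV" "xu \<in> pc_fun K dt {0..}" "xi \<in> r_fun K dt {-1..1}"
      "a \<in> pc_fun K dt {0..}" "b \<in> pc_fun K dt {0..}" and l: "0 \<le> (l::real) \<and> l \<le> 1"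
    show "l * (y0 + integral {0..t} (\<lambda>\<tau>. H etac etad (pout (x0 \<tau>) (xu \<tau>) (a \<tau>) (xi \<tau>)))) +
       (1 - l) * (y0 + integral {0..t} (\<lambda>\<tau>. H etac etad (pout (x0 \<tau>) (xu \<tau>) (b \<tau>) (xi \<tau>))))
       \<le> y0 + integral {0..t} (\<lambda>\<tau>. H etac etad (pout (x0 \<tau>) (xu \<tau>) (l * a \<tau> + (1 - l) * b \<tau>) (xi \<tau>)))"
      by (use gpc[OF m(1)] gpc[OF m(2)] gr[OF m(3)] gpc[OF m(4)] gpc[OF m(5)] m l in \<open>intro conc_int good_H good_comb; assumption?\<close>) (auto simp: pout_aff3 H_conc[OF e])
  next
    fix x0 xu xi a b
    assume m: "x0 \<in> pc_fun K dt UNIV" "xu \<in> pc_fun K dt {0..}" "xi \<in> r_fun K dt {-1..1}"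
      "a \<in> pc_fun K dt {0..}" "b \<in> pc_fun K dt {0..}" and le: "\<forall>\<tau>\<in>{0..real K * dt}. a \<tau> \<le> b \<tau>"
    show "y0 + integral {0..t} (\<lambda>\<tau>. H etac etad (pout (x0 \<tau>) (xu \<tau>) (a \<tau>) (xi \<tau>)))
       \<le> y0 + integral {0..t} (\<lambda>\<tau>. H etac etad (pout (x0 \<tau>) (xu \<tau>) (b \<tau>) (xi \<tau>)))"
      by (rule mono_int) (use gpc[OF m(1)] gpc[OF m(2)] gr[OF m(3)] gpc[OF m(4)] gpc[OF m(5)] m le sub in \<open>auto intro!: good_H H_anti[OF e] pout_mono3\<close>)
  next
    fix x0 xu xd a b
    assume m: "x0 \<in> pc_fun K dt UNIV" "xu \<in> pc_fun K dt {0..}" "xd \<in> pc_fun K dt {0..}"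
      "a \<in> r_fun K dt {-1..1}" "b \<in> r_fun K dt {-1..1}" and le: "\<forall>\<tau>\<in>{0..real K * dt}. a \<tau> \<le> b \<tau>"
    show "y0 + integral {0..t} (\<lambda>\<tau>. H etac etad (pout (x0 \<tau>) (xu \<tau>) (xd \<tau>) (b \<tau>)))
       \<le> y0 + integral {0..t} (\<lambda>\<tau>. H etac etad (pout (x0 \<tau>) (xu \<tau>) (xd \<tau>) (a \<tau>)))"
      by (rule mono_int) (use gpc[OF m(1)] gpc[OF m(2)] gpc[OF m(3)] gr[OF m(4)] gr[OF m(5)] m le sub nn in \<open>auto intro!: good_H H_anti[OF e] pout_mono4\<close>)
  qed
qed

end
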